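(* Let $\mathbf{X}\subseteq\mathbb{N}^n$ be any set. Then $\mathbf{X}$ is hybridlinear if and only if $(\mathbf{X},\le_{\mathbf{P}_{\mathbf{X}}})$ is a well-quasi-order.
   Context: Hybridlinear: $\mathbf{X}=\mathbf{B}+\mathbb{N}(\mathbf{F})$ with $\mathbf{B},\mathbf{F}\subseteq\mathbb{N}^n$ finite (the empty set counts as hybridlinear). A vector $\mathbf{p}\in\mathbb{Z}^n$ is a preservant of $\mathbf{X}$ if $\mathbf{X}+\mathbf{p}\subseteq\mathbf{X}$; $\mathbf{P}_{\mathbf{X}}$ is the set of preservants. For an $\mathbb{N}$-generated set $\mathbf{P}$, $\mathbf{x}\le_{\mathbf{P}}\mathbf{y}$ iff $\mathbf{y}=\mathbf{x}+\mathbf{p}$ for some $\mathbf{p}\in\mathbf{P}$. A partial order is a well-quasi-order if it is well-founded and every subset has finitely many minimal elements. *)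

theory Defs
  imports "HOL-Analysis.Analysis"
begin

text \<open>Vectors of \<nat>^n are modelled as nat ^ 'n, vectors of \<int>^n as int ^ 'n,
  where 'n is an arbitrary finite index type (n = CARD('n)).\<close>

definition int_vec :: "nat ^ 'n \<Rightarrow> int ^ 'n" where
  "int_vec x = (\<chi> i. int (x $ i))"

definition nat_gen :: "(nat ^ 'n) set \<Rightarrow> (nat ^ 'n) set" where
  "nat_gen F = {x. \<exists>c :: nat ^ 'n \<Rightarrow> nat. x = (\<Sum>f\<in>F. c f *s f)}"

definition hybridlinear :: "(nat ^ 'n::finite) set \<Rightarrow> bool" where
  "hybridlinear X \<longleftrightarrow> (\<exists>B F. finite B \<and> finite F \<and>
      X = {b + v | b v. b \<in> B \<and> v \<in> nat_gen F})"

definition preservants :: "(nat ^ 'n::finite) set \<Rightarrow> (int ^ 'n) set" where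
  "preservants X = {p. \<forall>x\<in>X. \<exists>y\<in>X. int_vec y = int_vec x + p}"

definition le_P :: "(int ^ 'n::finite) set \<Rightarrow> nat ^ 'n \<Rightarrow> nat ^ 'n \<Rightarrow> bool" where
  "le_P P x y \<longleftrightarrow> (\<exists>p\<in>P. int_vec y = int_vec x + p)"

definition minimal_in :: "('a \<Rightarrow> 'a \<Rightarrow> bool) \<Rightarrow> 'a set \<Rightarrow> 'a \<Rightarrow> bool" where
  "minimal_in r S m \<longleftrightarrow> m \<in> S \<and> (\<forall>s\<in>S. r s m \<longrightarrow> s = m)"

definition partial_order_on_set :: "'a set \<Rightarrow> ('a \<Rightarrow> 'a \<Rightarrow> bool) \<Rightarrow> bool" where
  "partial_order_on_set A r \<longleftrightarrow>
     (\<forall>x\<in>A. r x x) \<and>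
     (\<forall>x\<in>A. \<forall>y\<in>A. \<forall>z\<in>A. r x y \<longrightarrow> r y z \<longrightarrow> r x z) \<and>
     (\<forall>x\<in>A. \<forall>y\<in>A. r x y \<longrightarrow> r y x \<longrightarrow> x = y)"

definition well_founded_on_set :: "'a set \<Rightarrow> ('a \<Rightarrow> 'a \<Rightarrow> bool) \<Rightarrow> bool" where
  "well_founded_on_set A r \<longleftrightarrow> (\<forall>S\<subseteq>A. S \<noteq> {} \<longrightarrow> (\<exists>m. minimal_in r S m))"

definition wqo_on_set :: "'a set \<Rightarrow> ('a \<Rightarrow> 'a \<Rightarrow> bool) \<Rightarrow> bool" where
  "wqo_on_set A r \<longleftrightarrow> partial_order_on_set A r \<and> well_founded_on_set A r \<and>
     (\<forall>S\<subseteq>A. finite {m. minimal_in r S m})"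

end

theory Submission
  imports Defs
begin

lemma nat_incsub:
  fixes s :: "nat \<Rightarrow> nat"
  shows "\<exists>f::nat\<Rightarrow>nat. strict_mono f \<and> (\<forall>m n::nat. m \<le> n \<longrightarrow> s (f m) \<le> s (f n))"
proof -
  obtain f where f: "strict_mono f" "monoseq (\<lambda>n. s (f n))" using seq_monosub by blast
  show ?thesis
  proof (cases "\<forall>m. \<forall>n\<ge>m. s (f m) \<le> s (f n)")
    case True then show ?thesis using f by blast
  next
    case False
    then have dec: "\<forall>m. \<forall>n\<ge>m. s (f n) \<le> s (f m)" using f(2) unfolding monoseq_def by blast
    define v where "v = (LEAST v. v \<in> range (\<lambda>n. s (f n)))"
    have "v \<in> range (\<lambda>n. s (f n))" unfolding v_def by (rule LeastI[of _ "s (f 0)"]) auto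
    then obtain N where N: "v = s (f N)" by auto
    have le: "\<And>k. v \<le> s (f k)" unfolding v_def by (rule Least_le) auto
    have eq: "\<And>k. k \<ge> N \<Longrightarrow> s (f k) = v"
    proof -
      fix k assume "k \<ge> N"
      then have "s (f k) \<le> s (f N)" using dec by blast
      then show "s (f k) = v" using le[of k] N by simp
    qed
    have "strict_mono (\<lambda>k. f (k + N))" using f(1) unfolding strict_mono_def by simp
    moreover have "\<forall>m n::nat. m \<le> n \<longrightarrow> s (f (m+N)) \<le> s (f (n+N))" using eq by simp
    ultimately show ?thesis by blast
  qed
qed

lemma dickson_fun:
  fixes g :: "nat \<Rightarrow> 'a \<Rightarrow> nat"
  assumes "finite I"
  shows "\<exists>f::nat\<Rightarrow>nat. strict_mono f \<and> (\<forall>i\<in>I. \<forall>m n::nat. m \<le> n \<longrightarrow> g (f m) i \<le> g (f n) i)"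
  using assms
proof (induction I rule: finite_induct)
  case empty
  have "strict_mono (\<lambda>x::nat. x)" by (simp add: strict_mono_def)
  then show ?case by blast
next
  case (insert a I)
  then obtain f where f: "strict_mono f" "\<forall>i\<in>I. \<forall>m n::nat. m \<le> n \<longrightarrow> g (f m) i \<le> g (f n) i"
    by blast
  obtain h where h: "strict_mono h" "\<forall>m n::nat. m \<le> n \<longrightarrow> g (f (h m)) a \<le> g (f (h n)) a"
    using nat_incsub[of "\<lambda>k. g (f k) a"] by blast
  have "strict_mono (f \<circ> h)" using f(1) h(1) by (simp add: strict_mono_def)
  moreover have "\<forall>i\<in>insert a I. \<forall>m n::nat. m \<le> n \<longrightarrow> g ((f\<circ>h) m) i \<le> g ((f\<circ>h) n) i"
  proof (intro ballI allI impI)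
    fix i m n assume "i \<in> insert a I" "m \<le> (n::nat)"
    moreover have "h m \<le> h n" using h(1) \<open>m \<le> n\<close> by (simp add: strict_mono_less_eq)
    ultimately show "g ((f\<circ>h) m) i \<le> g ((f\<circ>h) n) i" using f(2) h(2) by auto
  qed
  ultimately show ?case by blast
qed

definition presN :: "(nat^'n::finite) set \<Rightarrow> (nat^'n) set" where
  "presN X = {q. \<forall>x\<in>X. x + q \<in> X}"

definition leQ :: "(nat^'n::finite) set \<Rightarrow> nat^'n \<Rightarrow> nat^'n \<Rightarrow> bool" where
  "leQ Q x y \<longleftrightarrow> (\<exists>q\<in>Q. y = x + q)"

lemma int_vec_add: "int_vec (x + y) = int_vec x + int_vec y"
  by (simp add: int_vec_def vec_eq_iff)

lemma int_vec_inj: "int_vec x = int_vec y \<Longrightarrow> x = y"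
  by (simp add: int_vec_def vec_eq_iff)

lemma pres_iter:
  assumes "p \<in> preservants X" "x \<in> X"
  shows "\<exists>y\<in>X. \<forall>i. int (y$i) = int (x$i) + int k * p$i"
proof (induction k)
  case 0 then show ?case using assms(2) by auto
next
  case (Suc k)
  then obtain y where y: "y \<in> X" "\<forall>i. int (y$i) = int (x$i) + int k * p$i" by blast
  then obtain z where z: "z \<in> X" "int_vec z = int_vec y + p" using assms(1) unfolding preservants_def by blast
  have "\<forall>i. int (z$i) = int (x$i) + int (Suc k) * p$i"
  proof
    fix i
    have "int (z$i) = int (y$i) + p$i" using z(2) by (simp add: int_vec_def vec_eq_iff)
    then show "int (z$i) = int (x$i) + int (Suc k) * p$i" using y(2) by (simp add: algebra_simps)
  qed
  then show ?case using z(1) by blast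
qed

lemma pres_nonneg:
  assumes "X \<noteq> {}" "p \<in> preservants X"
  shows "0 \<le> p$i"
proof (rule ccontr)
  assume neg: "\<not> 0 \<le> p$i"
  obtain x where x: "x \<in> X" using assms(1) by blast
  obtain y where y: "y \<in> X" "\<forall>j. int (y$j) = int (x$j) + int (x$i + 1) * p$j"
    using pres_iter[OF assms(2) x, of "x$i + 1"] by blast
  have "int (x$i + 1) * p$i \<le> int (x$i + 1) * (-1)"
    using neg by (intro mult_left_mono) auto
  then have "int (y$i) < 0" using y(2)[rule_format, of i] by simp
  then show False by simp
qed

lemma leP_eq:
  assumes "X \<noteq> {}"
  shows "le_P (preservants X) = leQ (presN X)"
proof (intro ext iffI)
  fix x y assume "le_P (preservants X) x y"
  then obtain p where p: "p \<in> preservants X" "int_vec y = int_vec x + p" unfolding le_P_def by blast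
  define q :: "nat^_" where "q = (\<chi> i. nat (p$i))"
  have pq: "p = int_vec q" using pres_nonneg[OF assms p(1)] by (simp add: q_def int_vec_def vec_eq_iff)
  have "q \<in> presN X"
    unfolding presN_def
  proof (intro CollectI ballI)
    fix z assume "z \<in> X"
    then obtain w where "w \<in> X" "int_vec w = int_vec z + p" using p(1) unfolding preservants_def by blast
    then have "int_vec w = int_vec (z + q)" using pq by (simp add: int_vec_add)
    then have "w = z + q" by (rule int_vec_inj)
    then show "z + q \<in> X" using \<open>w \<in> X\<close> by simp
  qed
  moreover have "int_vec y = int_vec (x + q)" using p(2) pq by (simp add: int_vec_add)
  then have "y = x + q" by (rule int_vec_inj)
  ultimately show "leQ (presN X) x y" unfolding leQ_def by blast
next
  fix x y assume "leQ (presN X) x y"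
  then obtain q where q: "q \<in> presN X" "y = x + q" unfolding leQ_def by blast
  have "int_vec q \<in> preservants X" unfolding preservants_def
  proof (intro CollectI ballI)
    fix z assume "z \<in> X"
    then have "z + q \<in> X" using q(1) unfolding presN_def by blast
    then show "\<exists>y\<in>X. int_vec y = int_vec z + int_vec q" by (intro bexI[of _ "z+q"]) (simp_all add: int_vec_add)
  qed
  then show "le_P (preservants X) x y" unfolding le_P_def using q(2) by (intro bexI[of _ "int_vec q"]) (simp_all add: int_vec_add)
qed

definition msr :: "nat^'n::finite \<Rightarrow> nat" where
  "msr x = (\<Sum>i\<in>UNIV. x$i)"

lemma msr_add: "msr (x + y) = msr x + msr y"
  by (simp add: msr_def sum.distrib)

lemma msr_zero: "msr x = 0 \<Longrightarrow> x = 0"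
  by (simp add: msr_def vec_eq_iff)

lemma one_smult_nat[simp]: "Suc 0 *s (a::nat^'n) = a"
  by (simp add: vec_eq_iff)

lemma presN_0: "0 \<in> presN X" by (simp add: presN_def)

lemma presN_add: "p \<in> presN X \<Longrightarrow> q \<in> presN X \<Longrightarrow> p + q \<in> presN X"
  unfolding presN_def by (simp add: add.assoc[symmetric])

lemma presN_mem: "x \<in> X \<Longrightarrow> q \<in> presN X \<Longrightarrow> x + q \<in> X"
  unfolding presN_def by blast

lemma po_presN: "partial_order_on_set X (leQ (presN X))"
  unfolding partial_order_on_set_def
proof (intro conjI ballI impI)
  fix x assume "x \<in> X" then show "leQ (presN X) x x" unfolding leQ_def using presN_0
    by (intro bexI[of _ 0]) auto
next
  fix x y z assume "leQ (presN X) x y" "leQ (presN X) y z"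
  then obtain p q where pq: "p \<in> presN X" "q \<in> presN X" "y = x + p" "z = y + q" unfolding leQ_def by blast
  have "p + q \<in> presN X" using pq presN_add by blast
  moreover have "z = x + (p + q)" using pq by (simp add: add.assoc)
  ultimately show "leQ (presN X) x z" unfolding leQ_def by blast
next
  fix x y assume "leQ (presN X) x y" "leQ (presN X) y x"
  then obtain p q where "y = x + p" "x = y + q" unfolding leQ_def by blast
  then have "x = (x + p) + q" by simp
  then have "x = x + (p + q)" by (simp only: add.assoc)
  then have "msr (p + q) = 0" using msr_add[of x "p+q"] by simp
  then have "p = 0" using msr_add[of p q] msr_zero[of p] by simp
  then show "x = y" using \<open>y = x + p\<close> by simp
qed

lemma wf_leQ: "well_founded_on_set X (leQ Q)"
  unfolding well_founded_on_set_def
proof (intro allI impI)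
  fix S assume "S \<subseteq> X" "S \<noteq> {}"
  then obtain s0 where "s0 \<in> S" by blast
  define k where "k = (LEAST k. \<exists>s\<in>S. msr s = k)"
  have "\<exists>s\<in>S. msr s = k" unfolding k_def by (rule LeastI[of _ "msr s0"]) (use \<open>s0 \<in> S\<close> in blast)
  then obtain m where m: "m \<in> S" "msr m = k" by blast
  have le: "\<And>s. s \<in> S \<Longrightarrow> k \<le> msr s" unfolding k_def by (rule Least_le) blast
  have "minimal_in (leQ Q) S m" unfolding minimal_in_def
  proof (intro conjI ballI impI)
    show "m \<in> S" by fact
  next
    fix s assume s: "s \<in> S" "leQ Q s m"
    then obtain q where "m = s + q" unfolding leQ_def by blast
    then have "msr m = msr s + msr q" by (simp add: msr_add)
    then have "msr q = 0" using le[OF s(1)] m(2) by simp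
    then show "s = m" using msr_zero \<open>m = s + q\<close> by simp
  qed
  then show "\<exists>m. minimal_in (leQ Q) S m" by blast
qed

lemma nat_gen_add:
  assumes "x \<in> nat_gen F" "y \<in> nat_gen F"
  shows "x + y \<in> nat_gen F"
proof -
  obtain c d where "x = (\<Sum>f\<in>F. c f *s f)" "y = (\<Sum>f\<in>F. d f *s f)"
    using assms unfolding nat_gen_def by blast
  then have e: "x + y = (\<Sum>f\<in>F. (c f + d f) *s f)"
    by (simp add: sum.distrib[symmetric] vector_sadd_rdistrib)
  show ?thesis unfolding nat_gen_def by (rule CollectI, rule exI[of _ "\<lambda>f. c f + d f"], rule e)
qed

lemma nat_gen_0: "0 \<in> nat_gen F"
  unfolding nat_gen_def by (rule CollectI, rule exI[of _ "\<lambda>_. 0"]) simp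

lemma smult_in_presN: "a \<in> presN X \<Longrightarrow> (k::nat) *s a \<in> presN X"
proof (induction k)
  case 0 then show ?case by (simp add: presN_0)
next
  case (Suc k)
  have "Suc k *s a = a + k *s a" using vector_sadd_rdistrib[of 1 k a] by simp
  then show ?case using Suc presN_add by simp
qed

lemma sum_in_presN: "finite A \<Longrightarrow> A \<subseteq> presN X \<Longrightarrow> (\<Sum>a\<in>A. (c a::nat) *s a) \<in> presN X"
proof (induction A rule: finite_induct)
  case empty then show ?case by (simp add: presN_0)
next
  case (insert a A)
  have "c a *s a \<in> presN X" using insert.prems smult_in_presN by blast
  moreover have "(\<Sum>a\<in>A. c a *s a) \<in> presN X" using insert by blast
  ultimately show ?case using insert.hyps presN_add by simp
qed

lemma nat_gen_single: "a \<in> A \<Longrightarrow> finite A \<Longrightarrow> a \<in> nat_gen A"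
proof -
  assume "a \<in> A" "finite A"
  have "(\<Sum>f\<in>A. (if f = a then 1 else 0::nat) *s f) = (\<Sum>f\<in>A. (if f = a then f else 0))"
    by (rule sum.cong) auto
  also have "\<dots> = a" using \<open>a \<in> A\<close> \<open>finite A\<close> by (simp add: sum.delta)
  finally have e: "a = (\<Sum>f\<in>A. (if f = a then 1 else 0::nat) *s f)" by simp
  show ?thesis unfolding nat_gen_def by (rule CollectI, rule exI, rule e)
qed

lemma wqo_imp_hl:
  fixes X :: "(nat ^ 'n::finite) set"
  assumes ne: "X \<noteq> {}" and w: "wqo_on_set X (leQ (presN X))"
  shows "hybridlinear X"
proof -
  define Q where "Q = presN X"
  define r where "r = leQ Q"
  have po: "partial_order_on_set X r" unfolding r_def Q_def by (rule po_presN)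
  have rrefl: "\<And>x. x \<in> X \<Longrightarrow> r x x" using po unfolding partial_order_on_set_def by blast
  have rtrans: "\<And>x y z. x \<in> X \<Longrightarrow> y \<in> X \<Longrightarrow> z \<in> X \<Longrightarrow> r x y \<Longrightarrow> r y z \<Longrightarrow> r x z"
    using po unfolding partial_order_on_set_def by blast
  have wf: "well_founded_on_set X r" using w unfolding wqo_on_set_def r_def Q_def by blast
  have fm: "\<And>S. S \<subseteq> X \<Longrightarrow> finite {m. minimal_in r S m}" using w unfolding wqo_on_set_def r_def Q_def by blast
  define B where "B = {m. minimal_in r X m}"
  have finB: "finite B" unfolding B_def by (rule fm) simp
  have BX: "B \<subseteq> X" unfolding B_def minimal_in_def by blast
  have cover: "\<exists>b\<in>B. \<exists>q\<in>Q. x = b + q" if x: "x \<in> X" for x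
  proof -
    define S where "S = {s\<in>X. r s x}"
    have "x \<in> S" using rrefl x unfolding S_def by blast
    have "S \<subseteq> X" "S \<noteq> {}" using \<open>x \<in> S\<close> unfolding S_def by auto
    then obtain m where m: "minimal_in r S m" using wf unfolding well_founded_on_set_def by blast
    then have mS: "m \<in> X" "r m x" unfolding minimal_in_def S_def by auto
    have "minimal_in r X m" unfolding minimal_in_def
    proof (intro conjI ballI impI)
      show "m \<in> X" by fact
    next
      fix s assume s: "s \<in> X" "r s m"
      then have "r s x" using rtrans[OF s(1) mS(1) x] mS(2) by blast
      then have "s \<in> S" using s unfolding S_def by blast
      then show "s = m" using m s(2) unfolding minimal_in_def by blast
    qed
    then have "m \<in> B" unfolding B_def by simp
    then show ?thesis using mS(2) unfolding r_def leQ_def by blast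
  qed
  define A where "A = {a\<in>Q. a \<noteq> 0 \<and> (\<forall>u\<in>Q. \<forall>v\<in>Q. a = u + v \<longrightarrow> u = 0 \<or> v = 0)}"
  obtain x0 where x0: "x0 \<in> X" using ne by blast
  have finA: "finite A"
  proof -
    define S where "S = (\<lambda>a. x0 + a) ` A"
    have SX: "S \<subseteq> X" unfolding S_def A_def Q_def using x0 presN_mem by blast
    have "S \<subseteq> {m. minimal_in r S m}"
    proof
      fix m assume "m \<in> S"
      then obtain a where a: "a \<in> A" "m = x0 + a" unfolding S_def by blast
      have "minimal_in r S m" unfolding minimal_in_def
      proof (intro conjI ballI impI)
        show "m \<in> S" by fact
      next
        fix s assume s: "s \<in> S" "r s m"
        then obtain a' where a': "a' \<in> A" "s = x0 + a'" unfolding S_def by blast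
        obtain q where q: "q \<in> Q" "m = s + q" using s(2) unfolding r_def leQ_def by blast
        have "x0 + a = x0 + (a' + q)" using a(2) a'(2) q(2) by (simp add: add.assoc)
        then have aa: "a = a' + q" by simp
        have "a' \<in> Q" "a' \<noteq> 0" using a'(1) unfolding A_def by auto
        then have "q = 0" using a(1) aa q(1) unfolding A_def by blast
        then show "s = m" using q(2) by simp
      qed
      then show "m \<in> {m. minimal_in r S m}" by simp
    qed
    then have "finite S" using fm[OF SX] finite_subset by blast
    moreover have "inj_on (\<lambda>a. x0 + a) A" by (rule inj_onI) simp
    ultimately show ?thesis unfolding S_def using finite_imageD by blast
  qed
  have AQ: "A \<subseteq> Q" unfolding A_def by blast
  have Qgen: "q \<in> nat_gen A" if "q \<in> Q" for q
    using that
  proof (induction q rule: measure_induct_rule[of msr])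
    case (less q)
    show ?case
    proof (cases "q = 0")
      case True then show ?thesis by (simp add: nat_gen_0)
    next
      case False
      show ?thesis
      proof (cases "q \<in> A")
        case True then show ?thesis using finA by (rule nat_gen_single)
      next
        case nA: False
        then obtain u v where uv: "u \<in> Q" "v \<in> Q" "q = u + v" "u \<noteq> 0" "v \<noteq> 0"
          using False less.prems unfolding A_def by blast
        have "msr u \<noteq> 0" "msr v \<noteq> 0" using uv(4,5) msr_zero by blast+
        then have "msr u < msr q" "msr v < msr q" using uv(3) msr_add[of u v] by simp_all
        then have "u \<in> nat_gen A" "v \<in> nat_gen A" using less.IH uv(1,2) by blast+
        then show ?thesis using uv(3) nat_gen_add by simp
      qed
    qed
  qed
  have genQ: "v \<in> Q" if "v \<in> nat_gen A" for v
    using that sum_in_presN[OF finA AQ[unfolded Q_def]] unfolding nat_gen_def Q_def by blast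
  have "X = {b + v | b v. b \<in> B \<and> v \<in> nat_gen A}"
  proof
    show "X \<subseteq> {b + v | b v. b \<in> B \<and> v \<in> nat_gen A}"
      using cover Qgen by blast
    show "{b + v | b v. b \<in> B \<and> v \<in> nat_gen A} \<subseteq> X"
      using BX genQ presN_mem unfolding Q_def by blast
  qed
  then show ?thesis unfolding hybridlinear_def using finA finB by blast
qed

lemma hl_imp_wqo:
  fixes X :: "(nat ^ 'n::finite) set"
  assumes hl: "hybridlinear X"
  shows "wqo_on_set X (leQ (presN X))"
proof -
  obtain B F where BF: "finite B" "finite F" "X = {b + v | b v. b \<in> B \<and> v \<in> nat_gen F}"
    using hl unfolding hybridlinear_def by blast
  define r where "r = leQ (presN X)"
  have genP: "w \<in> presN X" if w: "w \<in> nat_gen F" for w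
    unfolding presN_def
  proof (intro CollectI ballI)
    fix x assume "x \<in> X"
    then obtain b v where bv: "b \<in> B" "v \<in> nat_gen F" "x = b + v" using BF(3) by blast
    then have "x + w = b + (v + w)" by (simp add: add.assoc)
    moreover have "v + w \<in> nat_gen F" using bv(2) w by (rule nat_gen_add)
    ultimately show "x + w \<in> X" using BF(3) bv(1) by blast
  qed
  have fin: "finite {m. minimal_in r S m}" if SX: "S \<subseteq> X" for S
  proof (rule ccontr)
    define M where "M = {m. minimal_in r S m}"
    assume "\<not> finite {m. minimal_in r S m}"
    then have infM: "infinite M" unfolding M_def by simp
    define Y where "Y = (\<lambda>b. {b + v | v. v \<in> nat_gen F})"
    have "M \<subseteq> (\<Union>b\<in>B. Y b)" using SX BF(3) unfolding M_def minimal_in_def Y_def by blast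
    then have "\<exists>b\<in>B. infinite (M \<inter> Y b)"
    proof -
      assume sub: "M \<subseteq> (\<Union>b\<in>B. Y b)"
      have "M = (\<Union>b\<in>B. M \<inter> Y b)" using sub by blast
      show ?thesis
      proof (rule ccontr)
        assume "\<not> (\<exists>b\<in>B. infinite (M \<inter> Y b))"
        then have "\<And>b. b \<in> B \<Longrightarrow> finite (M \<inter> Y b)" by blast
        then have "finite (\<Union>b\<in>B. M \<inter> Y b)" by (rule finite_UN_I[OF BF(1)])
        then show False using infM \<open>M = (\<Union>b\<in>B. M \<inter> Y b)\<close> by simp
      qed
    qed
    then obtain b where b: "b \<in> B" "infinite (M \<inter> Y b)" by blast
    obtain g :: "nat \<Rightarrow> _" where g: "inj g" "range g \<subseteq> M \<inter> Y b"
      using infinite_countable_subset[OF b(2)] by blast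
    have "\<forall>k. \<exists>c. g k = b + (\<Sum>f\<in>F. c f *s f)"
    proof
      fix k
      have "g k \<in> Y b" using g(2) by blast
      then obtain v where v: "g k = b + v" "v \<in> nat_gen F" unfolding Y_def by blast
      then obtain c where "v = (\<Sum>f\<in>F. c f *s f)" unfolding nat_gen_def by blast
      then have "g k = b + (\<Sum>f\<in>F. c f *s f)" using v(1) by simp
      then show "\<exists>c. g k = b + (\<Sum>f\<in>F. c f *s f)" by (rule exI[of _ c])
    qed
    then have "\<exists>C. \<forall>k. g k = b + (\<Sum>f\<in>F. C k f *s f)" by (rule choice)
    then obtain C where C0: "\<forall>k. g k = b + (\<Sum>f\<in>F. C k f *s f)" by (elim exE)
    then have C: "\<And>k. g k = b + (\<Sum>f\<in>F. C k f *s f)" by blast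
    obtain h :: "nat \<Rightarrow> nat" where h: "strict_mono h"
        "\<forall>i\<in>F. \<forall>m n::nat. m \<le> n \<longrightarrow> C (h m) i \<le> C (h n) i"
      using dickson_fun[OF BF(2), of C] by blast
    have le: "\<And>f. f \<in> F \<Longrightarrow> C (h 0) f \<le> C (h 1) f" using h(2) by simp
    define d where "d = (\<Sum>f\<in>F. (C (h 1) f - C (h 0) f) *s f)"
    have "(\<Sum>f\<in>F. C (h 1) f *s f) = (\<Sum>f\<in>F. C (h 0) f *s f + (C (h 1) f - C (h 0) f) *s f)"
    proof (rule sum.cong)
      fix f assume "f \<in> F"
      then have e: "C (h 0) f + (C (h 1) f - C (h 0) f) = C (h 1) f" using le by simp
      have eq: "C (h 0) f *s f + (C (h 1) f - C (h 0) f) *s f = (C (h 0) f + (C (h 1) f - C (h 0) f)) *s f"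
        by (rule vector_sadd_rdistrib[symmetric])
      show "C (h 1) f *s f = C (h 0) f *s f + (C (h 1) f - C (h 0) f) *s f"
        unfolding eq e by (rule refl)
    qed simp
    then have s1: "(\<Sum>f\<in>F. C (h 1) f *s f) = (\<Sum>f\<in>F. C (h 0) f *s f) + d"
      unfolding d_def by (simp only: sum.distrib)
    have "g (h 1) = g (h 0) + d" unfolding C[of "h 1"] C[of "h 0"] s1 by (simp only: add.assoc)
    moreover have "d \<in> nat_gen F" unfolding d_def nat_gen_def
      by (rule CollectI, rule exI[of _ "\<lambda>f. C (h 1) f - C (h 0) f"], rule refl)
    then have "d \<in> presN X" by (rule genP)
    ultimately have "r (g (h 0)) (g (h 1))" unfolding r_def leQ_def by blast
    moreover have "g (h 1) \<in> M" "g (h 0) \<in> M" using g(2) by auto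
    ultimately have "g (h 0) = g (h 1)" unfolding M_def minimal_in_def by blast
    then have "h 0 = h 1" using g(1) by (simp add: inj_eq)
    moreover have "h 0 < h 1" using h(1) by (rule strict_monoD) simp
    ultimately show False by simp
  qed
  show ?thesis unfolding wqo_on_set_def r_def[symmetric]
    using po_presN[of X] wf_leQ[of X "presN X"] fin unfolding r_def by blast
qed

theorem mainTheorem14:
  fixes X :: "(nat ^ 'n::finite) set"
  shows "hybridlinear X \<longleftrightarrow> wqo_on_set X (le_P (preservants X))"
proof (cases "X = {}")
  case True
  have "hybridlinear X" unfolding hybridlinear_def True
    by (rule exI[of _ "{}"], rule exI[of _ "{}"]) simp
  moreover have "wqo_on_set X (le_P (preservants X))"
    unfolding True wqo_on_set_def partial_order_on_set_def well_founded_on_set_def minimal_in_def by auto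
  ultimately show ?thesis by simp
next
  case False
  show ?thesis unfolding leP_eq[OF False] using hl_imp_wqo wqo_imp_hl[OF False] by blast
qed

end
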